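(* Let $p$ be a prime with $p\equiv 1\pmod 8$ and $p \equiv 2 \pmod 3$, and let $n\ge 2$ be an integer. Let $(\alpha,\beta,\kappa)\in\mathbb{Z}^3$ be nonzero integers such that: (B1) $\alpha$ and $\beta$ are odd and $\gcd(\alpha,3)=\gcd(\alpha,p)=\gcd(\alpha,\beta)=\gcd(\beta,p)=1$; (B2) for every odd prime $l\ne 3$ dividing $\alpha\beta$, $p$ is a square in $\mathbb{Q}_l^\times$; (B3) $v_3(\kappa)$ is an odd positive integer and $v_3(\kappa)<2n-1$; (B4) $\kappa\not\equiv 0 \pmod p$; (B5) for every odd prime $l\ne 3$ dividing $\kappa$, $p$ is a square in $\mathbb{Q}_l^\times$. Define $A = \frac{p\alpha^2-9\beta^2}{2}$, $B = 9(p\alpha^2-9\beta^2)\kappa^2$, $C = 9(p\alpha^2+9\beta^2)\kappa^2$, $D=\frac{p\alpha^2+9\beta^2}{2}$, $E = 81\alpha\beta\kappa^3$, $F = 18\alpha\beta\kappa$, $G = 3\alpha\beta$. Then $(A,B,C,D,E,F,G)$ satisfies Hypothesis FM with respect to $(p,n)$.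
   Context: $v_l$ denotes the $l$-adic valuation. Hypothesis FM. Let $p$ be a prime with $p\equiv 1 \pmod 8$ and $n\ge 1$ an integer. A septuple $(A,B,C,D,E,F,G)\in\mathbb{Z}^7$, not all zero, satisfies Hypothesis FM with respect to $(p,n)$ if: (A1) $B^2 - C^2 + 2pEF = 0$, $2AB - 2CD + pF^2 = 0$, and $A^2 - D^2 + pG^2 = 0$; (A2) for every odd prime $l$ with $l\ne 3$, $l\ne p$ and $l\mid E$: $p$ is a square in $\mathbb{Q}_l^\times$ or $v_l(E)-v_l(G)<6n$; (A3) $\gcd(A,D,G)=1$, $E\not\equiv 0 \pmod p$ and $G\not\equiv 0\pmod p$; (A4) for every odd prime $l$ with $l\ne 3$, $l\ne p$ and $l \mid \gcd(AC-BD,\ DE-CF,\ AE-BF)$: $p$ is a square in $\mathbb{Q}_l^\times$; (A5) there is an integer $H$ with $G - EH^6\equiv 0 \pmod p$ such that $A+\zeta BH^4$ is a quadratic non-residue in $\mathbb{F}_p^\times$ for every cube root of unity $\zeta\in\mathbb{F}_p^\times$; and, if $3$ is a quadratic non-residue in $\mathbb{F}_p^\times$, additionally: (A6) $v_3(E)-v_3(G)<6n$; (A7) $A+B\not\equiv 0\pmod 3$ and $G\equiv 0 \pmod 3$. *)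

theory Defs
  imports "HOL-Number_Theory.Number_Theory"
begin

text \<open>A nonzero integer is a square in Q_l iff it is a square in Z_l, and by
  compactness of Z_l this holds iff x^2 = a is solvable modulo every power l^k.\<close>
definition padic_square :: "int \<Rightarrow> int \<Rightarrow> bool" where
  "padic_square l a \<longleftrightarrow> a \<noteq> 0 \<and> (\<forall>k::nat. \<exists>x::int. [x^2 = a] (mod l^k))"

definition qnr :: "int \<Rightarrow> int \<Rightarrow> bool" where
  "qnr p a \<longleftrightarrow> Legendre a p = -1"

definition vdiff :: "int \<Rightarrow> int \<Rightarrow> int \<Rightarrow> int" where
  "vdiff l x y = int (multiplicity l x) - int (multiplicity l y)"

definition hypFM :: "int \<Rightarrow> nat \<Rightarrow> int \<Rightarrow> int \<Rightarrow> int \<Rightarrow> int \<Rightarrow> int \<Rightarrow> int \<Rightarrow> int \<Rightarrow> bool" where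
  "hypFM p n A B C D E F G \<longleftrightarrow>
     \<not> (A = 0 \<and> B = 0 \<and> C = 0 \<and> D = 0 \<and> E = 0 \<and> F = 0 \<and> G = 0) \<and>
     \<comment> \<open>(A1)\<close>
     B^2 - C^2 + 2*p*E*F = 0 \<and> 2*A*B - 2*C*D + p*F^2 = 0 \<and> A^2 - D^2 + p*G^2 = 0 \<and>
     \<comment> \<open>(A2)\<close>
     (\<forall>l::int. prime l \<and> odd l \<and> l \<noteq> 3 \<and> l \<noteq> p \<and> l dvd E \<longrightarrow>
        padic_square l p \<or> vdiff l E G < 6 * int n) \<and>
     \<comment> \<open>(A3)\<close>
     gcd (gcd A D) G = 1 \<and> \<not> [E = 0] (mod p) \<and> \<not> [G = 0] (mod p) \<and>
     \<comment> \<open>(A4)\<close>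
     (\<forall>l::int. prime l \<and> odd l \<and> l \<noteq> 3 \<and> l \<noteq> p \<and>
        l dvd gcd (gcd (A*C - B*D) (D*E - C*F)) (A*E - B*F) \<longrightarrow> padic_square l p) \<and>
     \<comment> \<open>(A5)\<close>
     (\<exists>H::int. [G - E*H^6 = 0] (mod p) \<and>
        (\<forall>z::int. [z^3 = 1] (mod p) \<longrightarrow> qnr p (A + z*B*H^4))) \<and>
     \<comment> \<open>(A6),(A7), only when 3 is a non-residue mod p\<close>
     (qnr p 3 \<longrightarrow>
        vdiff 3 E G < 6 * int n \<and> \<not> [A + B = 0] (mod 3) \<and> [G = 0] (mod 3))"

end

theory Submission
  imports Defs
begin

lemma Leg_cong:
  assumes "[a = b] (mod p)"
  shows "Legendre a p = Legendre b p"
proof -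
  have "[a = 0] (mod p) \<longleftrightarrow> [b = 0] (mod p)"
    using assms cong_sym cong_trans by blast
  moreover have "QuadRes p a \<longleftrightarrow> QuadRes p b"
    unfolding QuadRes_def using assms cong_sym cong_trans by blast
  ultimately show ?thesis unfolding Legendre_def by simp
qed

lemma Leg_vals: "Legendre a p \<in> {-1, 0, 1}"
  unfolding Legendre_def by auto

lemma small_cong_eq:
  fixes x y p :: int
  assumes "x \<in> {-1,0,1}" "y \<in> {-1,0,1}" "[x = y] (mod p)" "p > 2"
  shows "x = y"
proof -
  have "p dvd (x - y)" using assms(3) by (simp add: cong_iff_dvd_diff)
  then obtain k where k: "x - y = p * k" by blast
  have "\<bar>x - y\<bar> \<le> 2" using assms(1,2) by auto
  show ?thesis
  proof (rule ccontr)
    assume "x \<noteq> y"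
    then have "k \<noteq> 0" using k by auto
    then have "\<bar>p * k\<bar> \<ge> p" using assms(4) by (simp add: abs_mult) 
    then show False using k \<open>\<bar>x - y\<bar> \<le> 2\<close> assms(4) by simp
  qed
qed

lemma Leg_mult:
  fixes p :: int
  assumes "prime p" "p > 2"
  shows "Legendre (a*b) p = Legendre a p * Legendre b p"
proof -
  define q where "q = nat p"
  have pq: "p = int q" using assms q_def by simp
  have q: "prime q" "2 < q" using assms pq by auto
  let ?e = "(q - 1) div 2"
  have "[Legendre (a*b) p = (a*b) ^ ?e] (mod p)" using euler_criterion[OF q] pq by simp
  moreover have "[Legendre a p * Legendre b p = a ^ ?e * b ^ ?e] (mod p)"
    using euler_criterion[OF q, of a] euler_criterion[OF q, of b] pq cong_mult by auto
  ultimately have "[Legendre (a*b) p = Legendre a p * Legendre b p] (mod p)"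
    by (metis cong_sym cong_trans power_mult_distrib)
  moreover have "Legendre a p * Legendre b p \<in> {-1,0,1}"
    using Leg_vals[of a p] Leg_vals[of b p] by auto
  ultimately show ?thesis using small_cong_eq Leg_vals assms(2) by blast
qed

lemma Leg_power:
  fixes p :: int
  assumes "prime p" "p > 2"
  shows "Legendre (a^k) p = Legendre a p ^ k"
proof (induction k)
  case 0
  have "\<not> [1 = 0] (mod p)" using assms by (auto simp: cong_0_iff)
  moreover have "QuadRes p 1" unfolding QuadRes_def by (rule exI[of _ 1]) simp
  ultimately show ?case by (simp add: Legendre_def)
next
  case (Suc k)
  then show ?case using Leg_mult[OF assms, of a "a^k"] by simp
qed

lemma Leg_one:
  fixes p :: int
  assumes "prime p" "p > 2"
  shows "Legendre 1 p = 1"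
  using Leg_power[OF assms, of 1 0] by simp

lemma Leg_minus_one:
  fixes p :: int
  assumes "prime p" "[p = 1] (mod 4)"
  shows "Legendre (-1) p = 1"
proof -
  define q where "q = nat p"
  have pq: "p = int q" using assms q_def prime_ge_0_int by simp
  have "p mod 4 = 1" using assms(2) by (simp add: cong_def)
  then have "p > 2" using prime_ge_2_int[OF assms(1)] by presburger
  then have q: "prime q" "2 < q" using assms pq by auto
  have ev: "even ((q - 1) div 2)"
  proof -
    have "int q mod 4 = 1" using \<open>p mod 4 = 1\<close> pq by simp
    then have "q mod 4 = 1" by presburger
    then show ?thesis by presburger
  qed
  have "[Legendre (-1) p = (-1) ^ ((q - 1) div 2)] (mod p)" using euler_criterion[OF q] pq by simp
  then have "[Legendre (-1) p = 1] (mod p)" using ev by simp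
  then show ?thesis using small_cong_eq[OF Leg_vals _ _ \<open>p > 2\<close>] by auto
qed


lemma Leg_two:
  fixes p :: int
  assumes "prime p" "[p = 1] (mod 8)"
  shows "Legendre 2 p = 1"
proof -
  define q where "q = nat p"
  have pq: "p = int q" using assms q_def prime_ge_0_int by simp
  have "p mod 8 = 1" using assms(2) by (simp add: cong_def)
  then have "p > 2" using prime_ge_2_int[OF assms(1)] by presburger
  then have q: "prime q" "2 < q" using assms pq by auto
  have q8: "q mod 8 = 1" using \<open>p mod 8 = 1\<close> pq by presburger
  define e where "e = (q - 1) div 2"
  obtain g where g: "residue_primroot q g" using prime_primitive_root_exists[of q] q prime_gt_1_nat[OF q(1)] by blast
  have ordg: "ord q g = q - 1" and cop: "coprime q g"
    using g q(1) by (auto simp: residue_primroot_def totient_prime)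
  have "\<not> [g ^ e = 1] (mod q)"
  proof
    assume "[g ^ e = 1] (mod q)"
    then have "q - 1 dvd e" using ordg ord_divides by metis
    moreover have "0 < e" "e < q - 1" using q(2) e_def by auto
    ultimately show False using dvd_imp_le by fastforce
  qed
  define G where "G = int g"
  have nG: "\<not> [G ^ e = 1] (mod p)"
    using \<open>\<not> [g ^ e = 1] (mod q)\<close> cong_int_iff[of "g^e" 1 q] pq G_def by (simp add: of_nat_power)
  have eu: "[Legendre G p = G ^ e] (mod p)" using euler_criterion[OF q] pq e_def by simp
  have "\<not> [G = 0] (mod p)"
  proof
    assume "[G = 0] (mod p)"
    then have "q dvd g" using pq G_def by (simp add: cong_0_iff)
    then have "q dvd gcd q g" by simp
    then show False using cop q(1) by (simp add: prime_gt_1_nat)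
  qed
  then have "Legendre G p \<noteq> 0" unfolding Legendre_def by auto
  moreover have "Legendre G p \<noteq> 1" using eu nG cong_sym by metis
  ultimately have "Legendre G p = -1" using Leg_vals[of G p] by auto
  then have Ge: "[G ^ e = -1] (mod p)" using eu cong_sym by fastforce
  define x where "x = G ^ ((q - 1) div 8)"
  have "4 * ((q - 1) div 8) = e" using q8 e_def by presburger
  then have "x ^ 4 = G ^ e" unfolding x_def by (metis power_mult mult.commute)
  then have y: "p dvd x ^ 4 + 1" using Ge by (simp add: cong_iff_dvd_diff)
  have "(x + x^7)^2 - 2 = (x^4 + 1) * (x^2 * (1 - x^4 + x^8) + 2 * (x^4 - 1))"
    by (simp add: algebra_simps power2_eq_square eval_nat_numeral)
  then have "p dvd (x + x^7)^2 - 2" using y by simp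
  then have "QuadRes p 2" unfolding QuadRes_def by (auto simp: cong_iff_dvd_diff)
  moreover have "\<not> [2 = 0] (mod p)"
  proof
    assume "[2 = 0] (mod p)"
    then have "p dvd 2" by (simp add: cong_0_iff)
    then show False using \<open>p > 2\<close> zdvd_imp_le[of p 2] by simp
  qed
  ultimately show ?thesis unfolding Legendre_def by simp
qed


lemma not_QR_3_2: "\<not> QuadRes 3 (2::int)"
proof
  assume "QuadRes 3 (2::int)"
  then obtain y :: int where "[y^2 = 2] (mod 3)" unfolding QuadRes_def by blast
  then have h: "(y mod 3)^2 mod 3 = 2" by (simp add: cong_def power_mod)
  have "y mod 3 = 0 \<or> y mod 3 = 1 \<or> y mod 3 = 2" by presburger
  then show False using h by auto
qed

lemma Leg_three:
  fixes p :: int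
  assumes "prime p" "[p = 1] (mod 4)" "[p = 2] (mod 3)"
  shows "Legendre 3 p = -1"
proof -
  have "p mod 4 = 1" using assms(2) by (simp add: cong_def)
  then have "p > 2" using prime_ge_2_int[OF assms(1)] by presburger
  have "p \<noteq> 3" using \<open>p mod 4 = 1\<close> by auto
  have ev: "even (nat ((p - 1) div 2 * ((3 - 1) div 2)))"
    using \<open>p mod 4 = 1\<close> \<open>p > 2\<close> by (simp add: even_nat_iff) presburger
  have "Legendre p 3 * Legendre 3 p = 1"
    using Quadratic_Reciprocity_int[of p 3] assms(1) \<open>p > 2\<close> \<open>p \<noteq> 3\<close> ev by simp
  moreover have "Legendre p 3 = Legendre 2 3" using Leg_cong[OF assms(3)] .
  moreover have "Legendre 2 (3::int) = -1"
    using not_QR_3_2 by (simp add: Legendre_def cong_0_iff)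
  ultimately show ?thesis by simp
qed

lemma Leg_padic:
  fixes p l :: int
  assumes "prime p" "[p = 1] (mod 4)" "prime l" "odd l" "l \<noteq> p" "padic_square l p"
  shows "Legendre l p = 1"
proof -
  have "p mod 4 = 1" using assms(2) by (simp add: cong_def)
  then have "p > 2" using prime_ge_2_int[OF assms(1)] by presburger
  have "l \<ge> 2" using prime_ge_2_int[OF assms(3)] .
  then have "l > 2" using assms(4) by (cases "l = 2") auto
  from assms(6) obtain x where "[x^2 = p] (mod l^1)" unfolding padic_square_def by blast
  then have "QuadRes l p" unfolding QuadRes_def by auto
  moreover have "\<not> [p = 0] (mod l)"
  proof
    assume "[p = 0] (mod l)"
    then have "l dvd p" by (simp add: cong_0_iff)
    then show False using primes_dvd_imp_eq[OF assms(3) assms(1)] assms(5) by simp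
  qed
  ultimately have L1: "Legendre p l = 1" unfolding Legendre_def by simp
  have ev: "even (nat ((p - 1) div 2 * ((l - 1) div 2)))"
    using \<open>p mod 4 = 1\<close> \<open>p > 2\<close> \<open>l > 2\<close> by (simp add: even_nat_iff) presburger
  have "Legendre p l * Legendre l p = 1"
    using Quadratic_Reciprocity_int[of p l] assms \<open>p > 2\<close> \<open>l > 2\<close> ev by (simp add: prime_ge_0_int)
  then show ?thesis using L1 by simp
qed

lemma Leg_prod:
  fixes p :: int
  assumes "prime p" "p > 2"
  shows "m > 0 \<Longrightarrow> (\<forall>l. prime l \<and> l dvd m \<longrightarrow> Legendre l p = 1) \<Longrightarrow> Legendre m p = 1"
proof (induction "nat m" arbitrary: m rule: less_induct)
  case less
  show ?case
  proof (cases "m = 1")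
    case True
    then show ?thesis using Leg_one[OF assms] by simp
  next
    case False
    then have "\<not> is_unit m" using less.prems(1) by auto
    then obtain l where l: "l dvd m" "prime l" using prime_divisor_exists[of m] less.prems(1) by auto
    then obtain m' where m': "m = l * m'" by blast
    have "l \<ge> 2" using prime_ge_2_int[OF l(2)] .
    have "m' > 0" using m' less.prems(1) \<open>l \<ge> 2\<close> by (simp add: zero_less_mult_iff)
    have "m' < m" using m' \<open>m' > 0\<close> \<open>l \<ge> 2\<close> by (simp add: mult_less_cancel_right1)
    have "Legendre m' p = 1"
      using less.hyps[of m'] \<open>m' > 0\<close> \<open>m' < m\<close> less.prems(2) m' by auto
    then show ?thesis using Leg_mult[OF assms, of l m'] m' less.prems(2) l by simp
  qed
qed


lemma prime_dvd_3pow: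
  fixes l :: int
  assumes "prime l" "l dvd 3^k"
  shows "l = 3"
proof -
  have "k > 0" using assms by (cases k) (auto simp: not_prime_unit)
  then have "l dvd 3" using assms prime_dvd_power_iff by blast
  moreover have "prime (3::int)" by simp
  ultimately show ?thesis using primes_dvd_imp_eq assms(1) by blast
qed

lemma gcd1_prime:
  fixes x y r :: int
  assumes "gcd x y = 1" "prime r" "r dvd x" "r dvd y"
  shows False
proof -
  have "r dvd gcd x y" using assms(3,4) by simp
  then have "is_unit r" using assms(1) by simp
  then show False using assms(2) not_prime_unit by blast
qed

theorem lemma3p1:
  fixes p :: int and n :: nat and \<alpha> \<beta> \<kappa> :: int
  assumes "prime p" and "[p = 1] (mod 8)" and "[p = 2] (mod 3)" and "n \<ge> 2"
    and "\<alpha> \<noteq> 0" and "\<beta> \<noteq> 0" and "\<kappa> \<noteq> 0"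
    and B1: "odd \<alpha>" "odd \<beta>" "gcd \<alpha> 3 = 1" "gcd \<alpha> p = 1" "gcd \<alpha> \<beta> = 1" "gcd \<beta> p = 1"
    and B2: "\<forall>l::int. prime l \<and> odd l \<and> l \<noteq> 3 \<and> l dvd \<alpha> * \<beta> \<longrightarrow> padic_square l p"
    and B3: "odd (multiplicity 3 \<kappa>)" "multiplicity 3 \<kappa> > 0"
            "int (multiplicity 3 \<kappa>) < 2 * int n - 1"
    and B4: "\<not> [\<kappa> = 0] (mod p)"
    and B5: "\<forall>l::int. prime l \<and> odd l \<and> l \<noteq> 3 \<and> l dvd \<kappa> \<longrightarrow> padic_square l p"
  shows "hypFM p n
           ((p * \<alpha>^2 - 9 * \<beta>^2) div 2)
           (9 * (p * \<alpha>^2 - 9 * \<beta>^2) * \<kappa>^2)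
           (9 * (p * \<alpha>^2 + 9 * \<beta>^2) * \<kappa>^2)
           ((p * \<alpha>^2 + 9 * \<beta>^2) div 2)
           (81 * \<alpha> * \<beta> * \<kappa>^3)
           (18 * \<alpha> * \<beta> * \<kappa>)
           (3 * \<alpha> * \<beta>)"
proof -
  note pp = assms(1) and p8 = assms(2) and p3 = assms(3)
  note nz = assms(5,6,7)
  have p8': "p mod 8 = 1" using p8 by (simp add: cong_def)
  have p3': "p mod 3 = 2" using p3 by (simp add: cong_def)
  have p2: "p > 2" using prime_ge_2_int[OF pp] p8' by presburger
  have p4: "[p = 1] (mod 4)" using p8' by (simp add: cong_def) presburger
  have oddp: "odd p" using p8' by presburger
  have pn3: "p \<noteq> 3" using p3' by auto
  have pr3: "prime (3::int)" by simp
  have np3: "\<not> p dvd 3" using primes_dvd_imp_eq[OF pp pr3] pn3 by blast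
  have npa: "\<not> p dvd \<alpha>" using gcd1_prime[OF B1(4) pp] by auto
  have npb: "\<not> p dvd \<beta>" using gcd1_prime[OF B1(6) pp] by auto
  have npk: "\<not> p dvd \<kappa>" using B4 by (simp add: cong_0_iff)
  have n3a: "\<not> 3 dvd \<alpha>" using gcd1_prime[OF B1(3) pr3] by auto
  obtain a where ha: "p * \<alpha>^2 - 9 * \<beta>^2 = 2 * a"
  proof -
    have "even (p * \<alpha>^2 - 9 * \<beta>^2)" using oddp B1(1,2) by simp
    then show ?thesis using that by (metis evenE)
  qed
  obtain d where hd: "p * \<alpha>^2 + 9 * \<beta>^2 = 2 * d"
  proof -
    have "even (p * \<alpha>^2 + 9 * \<beta>^2)" using oddp B1(1,2) by simp
    then show ?thesis using that by (metis evenE)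
  qed
  have Ad: "(p * \<alpha>^2 - 9 * \<beta>^2) div 2 = a" "(p * \<alpha>^2 + 9 * \<beta>^2) div 2 = d"
    using ha hd by simp_all
  have hs: "a + d = p * \<alpha>^2" using ha hd by linarith
  have hdf: "d - a = 9 * \<beta>^2" using ha hd by linarith
  have BC: "9 * (p * \<alpha>^2 - 9 * \<beta>^2) * \<kappa>^2 = 18 * a * \<kappa>^2"
           "9 * (p * \<alpha>^2 + 9 * \<beta>^2) * \<kappa>^2 = 18 * d * \<kappa>^2"
    using ha hd by simp_all
  have gad: "gcd a d = 1"
  proof (rule ccontr)
    assume ne: "gcd a d \<noteq> 1"
    have "d > 0" using hd nz pp prime_gt_0_int[OF pp] by (smt (verit) mult_pos_pos zero_less_power2)
    then have "gcd a d \<noteq> 0" by simp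
    moreover have "\<not> is_unit (gcd a d)" using ne by simp
    ultimately obtain r where r: "r dvd gcd a d" "prime r" using prime_divisor_exists by blast
    have "r dvd a" "r dvd d" using r by (auto intro: dvd_trans)
    then have r1: "r dvd p * \<alpha>^2" and r2: "r dvd 9 * \<beta>^2" using hs hdf
      by (metis dvd_add) (metis \<open>r dvd a\<close> \<open>r dvd d\<close> dvd_diff hdf)
    have r9: "r dvd 9 \<Longrightarrow> r = 3" using prime_dvd_3pow[OF r(2), of 2] by simp
    from r1 r2 r(2) have "(r dvd p \<or> r dvd \<alpha>) \<and> (r dvd 9 \<or> r dvd \<beta>)"
      by (simp add: prime_dvd_mult_iff prime_dvd_power_iff)
    moreover have "r dvd p \<Longrightarrow> r = p" using primes_dvd_imp_eq[OF r(2) pp] by blast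
    ultimately show False using r9 pn3 npb n3a gcd1_prime[OF B1(5) r(2)] by blast
  qed
  have A1: "(18*a*\<kappa>^2)^2 - (18*d*\<kappa>^2)^2 + 2*p*(81 * \<alpha> * \<beta> * \<kappa>^3)*(18 * \<alpha> * \<beta> * \<kappa>) = 0"
  proof -
    have "(18*a*\<kappa>^2)^2 - (18*d*\<kappa>^2)^2 = - 324 * \<kappa>^4 * ((d - a) * (a + d))"
      by (simp add: algebra_simps power2_eq_square power4_eq_xxxx)
    also have "\<dots> = - 324 * \<kappa>^4 * (9 * \<beta>^2 * (p * \<alpha>^2))" using hs hdf by simp
    finally show ?thesis by (simp add: algebra_simps power2_eq_square power4_eq_xxxx eval_nat_numeral)
  qed
  have A2: "2*a*(18*a*\<kappa>^2) - 2*(18*d*\<kappa>^2)*d + p*(18 * \<alpha> * \<beta> * \<kappa>)^2 = 0"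
  proof -
    have "2*a*(18*a*\<kappa>^2) - 2*(18*d*\<kappa>^2)*d = - 36 * \<kappa>^2 * ((d - a) * (a + d))"
      by (simp add: algebra_simps power2_eq_square)
    also have "\<dots> = - 36 * \<kappa>^2 * (9 * \<beta>^2 * (p * \<alpha>^2))" using hs hdf by simp
    finally show ?thesis by (simp add: algebra_simps power2_eq_square)
  qed
  have A3: "a^2 - d^2 + p*(3 * \<alpha> * \<beta>)^2 = 0"
  proof -
    have "a^2 - d^2 = - ((d - a) * (a + d))" by (simp add: algebra_simps power2_eq_square)
    also have "\<dots> = - (9 * \<beta>^2 * (p * \<alpha>^2))" using hs hdf by simp
    finally show ?thesis by (simp add: algebra_simps power2_eq_square)
  qed
  have pr2: "prime (2::int)" by simp
  have dv81: "l dvd 81 \<Longrightarrow> prime l \<Longrightarrow> l = 3" for l :: int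
    using prime_dvd_3pow[of l 4] by simp
  have dv243: "l dvd 243 \<Longrightarrow> prime l \<Longrightarrow> l = 3" for l :: int
    using prime_dvd_3pow[of l 5] by simp
  have C0: "\<not> (a = 0 \<and> 18*a*\<kappa>^2 = 0 \<and> 18*d*\<kappa>^2 = 0 \<and> d = 0 \<and> 81 * \<alpha> * \<beta> * \<kappa>^3 = 0
     \<and> 18 * \<alpha> * \<beta> * \<kappa> = 0 \<and> 3 * \<alpha> * \<beta> = 0)" using nz by simp
  have C2: "\<forall>l::int. prime l \<and> odd l \<and> l \<noteq> 3 \<and> l \<noteq> p \<and> l dvd (81 * \<alpha> * \<beta> * \<kappa>^3) \<longrightarrow>
        padic_square l p \<or> vdiff l (81 * \<alpha> * \<beta> * \<kappa>^3) (3 * \<alpha> * \<beta>) < 6 * int n"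
  proof (intro allI impI)
    fix l :: int
    assume h: "prime l \<and> odd l \<and> l \<noteq> 3 \<and> l \<noteq> p \<and> l dvd (81 * \<alpha> * \<beta> * \<kappa>^3)"
    then have pl: "prime l" and "l dvd (81 * \<alpha> * \<beta> * \<kappa>^3)" by auto
    then have "l dvd 81 \<or> l dvd \<alpha> \<or> l dvd \<beta> \<or> l dvd \<kappa>"
      by (simp add: prime_dvd_mult_iff[OF pl] prime_dvd_power_iff[OF pl])
    then have "l dvd \<alpha> * \<beta> \<or> l dvd \<kappa>" using h dv81 by auto
    then show "padic_square l p \<or> vdiff l (81 * \<alpha> * \<beta> * \<kappa>^3) (3 * \<alpha> * \<beta>) < 6 * int n"
      using h B2 B5 by blast
  qed
  have C3: "gcd (gcd a d) (3 * \<alpha> * \<beta>) = 1 \<and> \<not> [81 * \<alpha> * \<beta> * \<kappa>^3 = 0] (mod p)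
            \<and> \<not> [3 * \<alpha> * \<beta> = 0] (mod p)"
  proof (intro conjI)
    show "gcd (gcd a d) (3 * \<alpha> * \<beta>) = 1" using gad by simp
    have "\<not> p dvd 81" using dv81[OF _ pp] pn3 by blast
    then show "\<not> [81 * \<alpha> * \<beta> * \<kappa>^3 = 0] (mod p)"
      using pp npa npb npk by (simp add: cong_0_iff prime_dvd_mult_iff prime_dvd_power_iff)
    show "\<not> [3 * \<alpha> * \<beta> = 0] (mod p)"
      using pp np3 npa npb by (simp add: cong_0_iff prime_dvd_mult_iff)
  qed
  have C4: "\<forall>l::int. prime l \<and> odd l \<and> l \<noteq> 3 \<and> l \<noteq> p \<and>
        l dvd gcd (gcd (a*(18*d*\<kappa>^2) - (18*a*\<kappa>^2)*d) (d*(81 * \<alpha> * \<beta> * \<kappa>^3) - (18*d*\<kappa>^2)*(18 * \<alpha> * \<beta> * \<kappa>)))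
                  (a*(81 * \<alpha> * \<beta> * \<kappa>^3) - (18*a*\<kappa>^2)*(18 * \<alpha> * \<beta> * \<kappa>)) \<longrightarrow> padic_square l p"
  proof (intro allI impI)
    fix l :: int
    assume h: "prime l \<and> odd l \<and> l \<noteq> 3 \<and> l \<noteq> p \<and>
        l dvd gcd (gcd (a*(18*d*\<kappa>^2) - (18*a*\<kappa>^2)*d) (d*(81 * \<alpha> * \<beta> * \<kappa>^3) - (18*d*\<kappa>^2)*(18 * \<alpha> * \<beta> * \<kappa>)))
                  (a*(81 * \<alpha> * \<beta> * \<kappa>^3) - (18*a*\<kappa>^2)*(18 * \<alpha> * \<beta> * \<kappa>))"
    then have l1: "l dvd d*(81 * \<alpha> * \<beta> * \<kappa>^3) - (18*d*\<kappa>^2)*(18 * \<alpha> * \<beta> * \<kappa>)"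
      and l2: "l dvd a*(81 * \<alpha> * \<beta> * \<kappa>^3) - (18*a*\<kappa>^2)*(18 * \<alpha> * \<beta> * \<kappa>)"
      by (meson dvd_trans gcd_dvd1 gcd_dvd2)+
    have e1: "d*(81 * \<alpha> * \<beta> * \<kappa>^3) - (18*d*\<kappa>^2)*(18 * \<alpha> * \<beta> * \<kappa>) = -(243 * d * \<alpha> * \<beta> * \<kappa>^3)"
      by (simp add: algebra_simps eval_nat_numeral)
    have e2: "a*(81 * \<alpha> * \<beta> * \<kappa>^3) - (18*a*\<kappa>^2)*(18 * \<alpha> * \<beta> * \<kappa>) = -(243 * a * \<alpha> * \<beta> * \<kappa>^3)"
      by (simp add: algebra_simps eval_nat_numeral)
    have "l dvd 243 \<or> l dvd d \<or> l dvd \<alpha> \<or> l dvd \<beta> \<or> l dvd \<kappa>"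
      using l1 h unfolding e1 by (simp add: prime_dvd_mult_iff prime_dvd_power_iff)
    moreover have "l dvd 243 \<or> l dvd a \<or> l dvd \<alpha> \<or> l dvd \<beta> \<or> l dvd \<kappa>"
      using l2 h unfolding e2 by (simp add: prime_dvd_mult_iff prime_dvd_power_iff)
    ultimately have "l dvd \<alpha> * \<beta> \<or> l dvd \<kappa>" using h dv243 gcd1_prime[OF gad, of l] by auto
    then show "padic_square l p" using h B2 B5 by blast
  qed
  define v where "v = multiplicity 3 \<kappa>"
  obtain c where kc: "\<kappa> = 3^v * c" and n3c: "\<not> 3 dvd c"
    using multiplicity_decompose'[of \<kappa> 3] v_def nz(3) by auto
  have cnz: "c \<noteq> 0" using kc nz by auto
  have Lca: "Legendre \<bar>c\<bar> p = 1"
  proof (rule Leg_prod[OF pp p2])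
    show "\<bar>c\<bar> > 0" using cnz by simp
    show "\<forall>l. prime l \<and> l dvd \<bar>c\<bar> \<longrightarrow> Legendre l p = 1"
    proof (intro allI impI)
      fix l :: int
      assume h: "prime l \<and> l dvd \<bar>c\<bar>"
      then have lc: "l dvd c" by simp
      then have lk: "l dvd \<kappa>" using kc by simp
      have l3: "l \<noteq> 3" using lc n3c by auto
      have lp: "l \<noteq> p" using lk npk by auto
      show "Legendre l p = 1"
      proof (cases "l = 2")
        case True
        then show ?thesis using Leg_two[OF pp p8] by simp
      next
        case False
        have "odd l"
        proof
          assume "even l"
          then have "2 dvd l" by simp
          then show False using primes_dvd_imp_eq[OF pr2] h False by blast
        qed
        then have "padic_square l p" using B5 h l3 lk by blast
        then show ?thesis using Leg_padic[OF pp p4 _ \<open>odd l\<close> lp] h by blast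
      qed
    qed
  qed
  have Lc: "Legendre c p = 1"
  proof (cases "c \<ge> 0")
    case True
    then show ?thesis using Lca by simp
  next
    case False
    then have "c = (-1) * \<bar>c\<bar>" by simp
    then show ?thesis using Leg_mult[OF pp p2, of "-1" "\<bar>c\<bar>"] Lca Leg_minus_one[OF pp p4] by simp
  qed
  have L3: "Legendre 3 p = -1" using Leg_three[OF pp p4 p3] .
  have "odd v" using B3(1) v_def by simp
  then have evs: "even (Suc v)" by simp
  have e3k: "3 * \<kappa> = 3^(Suc v) * c" using kc by simp
  have "Legendre (3^(Suc v) * c) p = Legendre (3^(Suc v)) p * Legendre c p" by (rule Leg_mult[OF pp p2])
  also have "\<dots> = (-1)^(Suc v)" by (simp only: Leg_power[OF pp p2] L3 Lc mult_1_right)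
  finally have "Legendre (3 * \<kappa>) p = (-1)^(Suc v)" unfolding e3k .
  then have L3k: "Legendre (3 * \<kappa>) p = 1" using evs by simp
  then obtain y where y: "[y^2 = 3 * \<kappa>] (mod p)"
    unfolding Legendre_def QuadRes_def by (auto split: if_splits)
  have "\<not> p dvd 3 * \<kappa>" using pp np3 npk by (simp add: prime_dvd_mult_iff)
  then have "coprime (3 * \<kappa>) p" using prime_imp_coprime[OF pp] coprime_commute by blast
  then obtain w where w: "[3 * \<kappa> * w = 1] (mod p)" using cong_solve_coprime_int by blast
  define H where "H = y * w"
  define t where "t = 3 * \<kappa> * H^2"
  have "p dvd y^2 - 3 * \<kappa>" using y by (simp add: cong_iff_dvd_diff)
  moreover have "p dvd 3 * \<kappa> * w - 1" using w by (simp add: cong_iff_dvd_diff)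
  moreover have "t - 1 = 3*\<kappa>*w*w*(y^2 - 3*\<kappa>) + (3*\<kappa>*w - 1)*(3*\<kappa>*w + 1)"
    unfolding t_def H_def by (simp add: algebra_simps power2_eq_square)
  ultimately have "p dvd t - 1" by simp
  then obtain k where k: "t - 1 = p * k" by blast
  have C5a: "[3 * \<alpha> * \<beta> - (81 * \<alpha> * \<beta> * \<kappa>^3) * H^6 = 0] (mod p)"
  proof -
    have "3 * \<alpha> * \<beta> - (81 * \<alpha> * \<beta> * \<kappa>^3) * H^6 = - 3 * \<alpha> * \<beta> * (t - 1) * (t^2 + t + 1)"
      unfolding t_def by (simp add: algebra_simps eval_nat_numeral)
    also have "\<dots> = p * (- 3 * \<alpha> * \<beta> * k * (t^2 + t + 1))" using k by simp
    finally show ?thesis by (simp add: cong_0_iff)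
  qed
  define S where "S = a + 18*a*\<kappa>^2*H^4"
  have LS: "Legendre S p = -1"
  proof -
    have "2*S + 27*\<beta>^2 = (2*a)*(1+2*t^2) + 27*\<beta>^2"
      unfolding S_def t_def by (simp add: algebra_simps eval_nat_numeral)
    also have "\<dots> = (p*\<alpha>^2 - 9*\<beta>^2)*(1+2*t^2) + 27*\<beta>^2" using ha by simp
    also have "\<dots> = p*\<alpha>^2*(1+2*t^2) - 18*\<beta>^2*(t - 1)*(t+1)"
      by (simp add: algebra_simps power2_eq_square)
    also have "\<dots> = p*(\<alpha>^2*(1+2*t^2) - 18*\<beta>^2*k*(t+1))" using k by (simp add: algebra_simps)
    finally have "[2*S = -27*\<beta>^2] (mod p)" by (simp add: cong_iff_dvd_diff)
    then have "Legendre (2*S) p = Legendre ((-1) * 3^3 * \<beta>^2) p" using Leg_cong by simp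
    moreover have "Legendre (2*S) p = Legendre S p"
      using Leg_mult[OF pp p2, of 2 S] Leg_two[OF pp p8] by simp
    moreover have "Legendre \<beta> p \<noteq> 0" using npb by (simp add: Legendre_def cong_0_iff)
    then have "Legendre \<beta> p ^ 2 = 1" using Leg_vals[of \<beta> p] by auto
    then have "Legendre ((-1) * 3^3 * \<beta>^2) p = -1"
      by (simp only: Leg_mult[OF pp p2] Leg_power[OF pp p2] Leg_minus_one[OF pp p4] L3 \<open>Legendre \<beta> p ^ 2 = 1\<close>) simp
    ultimately show ?thesis by simp
  qed
  have C5: "\<exists>H::int. [3 * \<alpha> * \<beta> - (81 * \<alpha> * \<beta> * \<kappa>^3)*H^6 = 0] (mod p) \<and>
        (\<forall>z::int. [z^3 = 1] (mod p) \<longrightarrow> qnr p (a + z*(18*a*\<kappa>^2)*H^4))"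
  proof (intro exI conjI allI impI)
    show "[3 * \<alpha> * \<beta> - (81 * \<alpha> * \<beta> * \<kappa>^3)*H^6 = 0] (mod p)" by (rule C5a)
    fix z :: int
    assume z3: "[z^3 = 1] (mod p)"
    have npz: "\<not> p dvd z"
    proof
      assume "p dvd z"
      then have "p dvd z^3" by (simp add: power3_eq_cube)
      moreover have "p dvd z^3 - 1" using z3 by (simp add: cong_iff_dvd_diff)
      ultimately have "p dvd z^3 - (z^3 - 1)" by (rule dvd_diff)
      then have "p dvd 1" by simp
      then show False using pp by (simp add: not_prime_unit)
    qed
    define q where "q = nat p"
    have pq: "p = int q" using pp q_def prime_ge_0_int by simp
    have q: "prime q" using pp pq by simp
    define zz where "zz = nat (z mod p)"
    have zz: "int zz = z mod p" using zz_def p2 by simp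
    have "\<not> q dvd zz"
    proof
      assume "q dvd zz"
      then have "p dvd z mod p" using zz pq by (metis of_nat_dvd_iff)
      then show False using npz by (simp add: dvd_mod_iff)
    qed
    then have "[zz^(q-1) = 1] (mod q)" using fermat_theorem[OF q] by blast
    then have "[int zz^(q-1) = 1] (mod p)" using pq by (metis cong_int_iff of_nat_1 of_nat_power)
    moreover have "[int zz = z] (mod p)" using zz by (simp add: cong_def)
    ultimately have zf: "[z^(q-1) = 1] (mod p)" by (meson cong_pow cong_sym cong_trans)
    have "int q mod 3 = 2" using p3' pq by simp
    then have "q - 1 = 3 * ((q - 1) div 3) + 1" by presburger
    then have "z^(q-1) = (z^3)^((q - 1) div 3) * z" by (metis power_add power_mult power_one_right)
    moreover have "[(z^3)^((q - 1) div 3) * z = 1^((q - 1) div 3) * z] (mod p)"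
      using z3 by (intro cong_mult cong_pow) auto
    ultimately have "[z = 1] (mod p)" using zf by (metis cong_sym cong_trans power_one mult_1)
    then have "p dvd z - 1" by (simp add: cong_iff_dvd_diff)
    then have "p dvd (z - 1) * (18*a*\<kappa>^2*H^4)" by simp
    moreover have "(a + z*(18*a*\<kappa>^2)*H^4) - S = (z - 1) * (18*a*\<kappa>^2*H^4)"
      unfolding S_def by (simp add: algebra_simps)
    ultimately have "[a + z*(18*a*\<kappa>^2)*H^4 = S] (mod p)" by (simp add: cong_iff_dvd_diff)
    then show "qnr p (a + z*(18*a*\<kappa>^2)*H^4)" using Leg_cong LS unfolding qnr_def by metis
  qed
  have C6: "qnr p 3 \<longrightarrow> vdiff 3 (81 * \<alpha> * \<beta> * \<kappa>^3) (3 * \<alpha> * \<beta>) < 6 * int n \<and>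
        \<not> [a + 18*a*\<kappa>^2 = 0] (mod 3) \<and> [3 * \<alpha> * \<beta> = 0] (mod 3)"
  proof (intro impI conjI)
    have pe3: "prime_elem (3::int)" using pr3 by (rule prime_imp_prime_elem)
    have ab: "\<alpha> * \<beta> \<noteq> 0" using nz by simp
    have m81: "multiplicity 3 (81::int) = 4" using multiplicity_prime_power[OF pe3, of 4] by simp
    have m3: "multiplicity 3 (3::int) = 1" using multiplicity_prime_power[OF pe3, of 1] by simp
    have "multiplicity 3 (81 * \<alpha> * \<beta> * \<kappa>^3) = multiplicity 3 ((3^4 * (\<alpha> * \<beta>)) * \<kappa>^3)"
      by (simp add: mult.assoc)
    also have "\<dots> = 4 + multiplicity 3 (\<alpha> * \<beta>) + 3 * v"
      using pe3 ab nz v_def m81 by (simp add: prime_elem_multiplicity_mult_distrib prime_elem_multiplicity_power_distrib)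
    finally have m1: "multiplicity 3 (81 * \<alpha> * \<beta> * \<kappa>^3) = 4 + multiplicity 3 (\<alpha> * \<beta>) + 3 * v" .
    have "multiplicity 3 (3 * \<alpha> * \<beta>) = multiplicity 3 (3^1 * (\<alpha> * \<beta>))" by (simp add: mult.assoc)
    also have "\<dots> = 1 + multiplicity 3 (\<alpha> * \<beta>)"
      using pe3 ab m3 by (simp add: prime_elem_multiplicity_mult_distrib)
    finally have m2: "multiplicity 3 (3 * \<alpha> * \<beta>) = 1 + multiplicity 3 (\<alpha> * \<beta>)" .
    show "vdiff 3 (81 * \<alpha> * \<beta> * \<kappa>^3) (3 * \<alpha> * \<beta>) < 6 * int n"
      unfolding vdiff_def m1 m2 using B3(3) v_def by simp
    show "\<not> [a + 18*a*\<kappa>^2 = 0] (mod 3)"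
    proof
      assume "[a + 18*a*\<kappa>^2 = 0] (mod 3)"
      then have "3 dvd a + 18*a*\<kappa>^2" by (simp add: cong_0_iff)
      moreover have "3 dvd 18*a*\<kappa>^2" by simp
      ultimately have "3 dvd a" by (simp add: dvd_add_left_iff)
      then have "3 dvd p * \<alpha>^2 - 9 * \<beta>^2" using ha by simp
      moreover have "3 dvd 9 * \<beta>^2" by simp
      ultimately have "3 dvd (p * \<alpha>^2 - 9 * \<beta>^2) + 9 * \<beta>^2" by (rule dvd_add)
      then have "3 dvd p * \<alpha>^2" by simp
      then have "3 dvd p \<or> 3 dvd \<alpha>" using pr3 by (simp add: prime_dvd_mult_iff prime_dvd_power_iff)
      then show False using p3' n3a by auto
    qed
    show "[3 * \<alpha> * \<beta> = 0] (mod 3)" by (simp add: cong_0_iff)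
  qed
  show ?thesis unfolding hypFM_def Ad BC
    using C0 A1 A2 A3 C2 C3 C4 C5 C6 by blast
qed

end
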